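(* Let $S\subseteq\mathbb{S}$ be nonempty with $1\notin S$, and let $i^*=\min S$ be the highest-quality product in $S$. Then $\overline{re}\big((S\setminus\{i^*\})\cup\{1\}\big)\ge\overline{re}(S)$. In particular, there is a revenue-maximizing displayed set that contains product $1$.
   Context: Market model: sellers $\mathbb{S}=\{1,\dots,n\}$, product qualities $\theta_1\ge\theta_2\ge\dots\ge\theta_n\ge0$. For displayed set $S$ and prices $p_i\ge0$: $a_i=e^{\theta_i-p_i}$, MNL demand $q_i=a_i/(1+\sum_{j\in S}a_j)$; sellers in $S$ play the Bertrand game (seller $i$ chooses $p_i\ge0$ to maximize $p_iq_i$). $V:(0,\infty)\to(0,1)$: $V(x)=$ the unique $v\in(0,1)$ with $v\exp(v/(1-v))=x$. For nonempty $S$, $\bar q_0(S)\in(0,1)$ is the unique solution of $\sum_{i\in S}V(\bar q_0e^{\theta_i-1})=1-\bar q_0$, and $\bar q_i(S)=V(\bar q_0(S)e^{\theta_i-1})$ are the equilibrium demands. The equilibrium revenue is $\overline{re}(S)=\sum_{i\in S}\frac{\bar q_i(S)}{1-\bar q_i(S)}$, with $\overline{re}(\emptyset)=0$. *)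

theory Defs
  imports Complex_Main
begin

definition V :: "real \<Rightarrow> real" where
  "V x = (THE v. 0 < v \<and> v < 1 \<and> v * exp (v / (1 - v)) = x)"

text \<open>Equilibrium no-purchase share: unique q0 in (0,1) with
  sum_{i in S} V(q0 e^{theta_i - 1}) = 1 - q0.\<close>
definition q0bar :: "(nat \<Rightarrow> real) \<Rightarrow> nat set \<Rightarrow> real" where
  "q0bar \<theta> S = (THE q. 0 < q \<and> q < 1 \<and>
      (\<Sum>i\<in>S. V (q * exp (\<theta> i - 1))) = 1 - q)"

definition qbar :: "(nat \<Rightarrow> real) \<Rightarrow> nat set \<Rightarrow> nat \<Rightarrow> real" where
  "qbar \<theta> S i = V (q0bar \<theta> S * exp (\<theta> i - 1))"

definition re :: "(nat \<Rightarrow> real) \<Rightarrow> nat set \<Rightarrow> real" where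
  "re \<theta> S = (if S = {} then 0 else (\<Sum>i\<in>S. qbar \<theta> S i / (1 - qbar \<theta> S i)))"

end

theory Submission imports Defs begin

definition F :: "real \<Rightarrow> real" where "F v = v * exp (v / (1 - v))"

lemma F_strict: assumes "0 < v" "v < u" "u < 1" shows "F v < F u"
proof -
  have "v / (1 - v) < u / (1 - u)" using assms by (simp add: frac_less)
  hence "exp (v/(1-v)) < exp (u/(1-u))" by simp
  thus ?thesis unfolding F_def using assms
    by (intro mult_strict_mono) auto
qed

lemma F_ge: assumes "0 < v" "v < 1" shows "v \<le> F v"
proof -
  have "1 \<le> exp (v/(1-v))" using assms by simp
  thus ?thesis unfolding F_def using assms
    using mult_left_mono[of 1 "exp (v/(1-v))" v] by simp
qed

lemma F_cont: assumes "z < 1" shows "isCont F z"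
  unfolding F_def using assms by (intro continuous_intros) auto

lemma F_ex: assumes "0 < x" shows "\<exists>v. 0 < v \<and> v < 1 \<and> F v = x"
proof -
  define a where "a = min (1/2) (x / (2 * exp 1))"
  define b where "b = (2*x+1)/(2*x+2)"
  have a0: "0 < a" "a \<le> 1/2" using assms by (auto simp: a_def)
  have b: "1/2 \<le> b" "b < 1" using assms by (auto simp: b_def field_simps)
  have "F a \<le> a * exp 1"
  proof -
    have "a / (1 - a) \<le> 1" using a0 by (simp add: field_simps)
    thus ?thesis unfolding F_def using a0 by simp
  qed
  also have "\<dots> \<le> x/2" using assms exp_gt_zero[of 1] unfolding a_def
    by (simp add: min_def field_simps)
  finally have Fa: "F a \<le> x" using assms by simp
  have "b / (1 - b) = 2*x+1" using assms unfolding b_def by (simp add: field_simps)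
  hence "F b \<ge> b * (1 + (2*x+1))" unfolding F_def
    using b exp_ge_add_one_self[of "b/(1-b)"] by (intro mult_left_mono) auto
  moreover have "b * (1 + (2*x+1)) = 2*x+1" using assms unfolding b_def by (simp add: field_simps)
  hence "b * (1 + (2*x+1)) \<ge> x" using assms by linarith
  ultimately have Fb: "x \<le> F b" by simp
  have "\<exists>v. a \<le> v \<and> v \<le> b \<and> F v = x"
    by (rule IVT[of F a x b, OF Fa Fb]) (use a0 b F_cont in auto)
  then obtain v where "a \<le> v" "v \<le> b" "F v = x" by blast
  thus ?thesis using a0 b by (intro exI[of _ v]) auto
qed

lemma F_inj: assumes "0 < v" "v < 1" "0 < u" "u < 1" "F v = F u" shows "v = u"
  using F_strict assms by (metis linorder_neqE_linordered_idom less_irrefl)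

lemma V_prop: assumes "0 < x" shows "0 < V x \<and> V x < 1 \<and> F (V x) = x"
proof -
  have "\<exists>!v. 0 < v \<and> v < 1 \<and> v * exp (v / (1 - v)) = x"
    using F_ex[OF assms] F_inj unfolding F_def by metis
  thus ?thesis unfolding V_def F_def by (rule theI')
qed

lemma V_F: assumes "0 < v" "v < 1" shows "V (F v) = v"
proof -
  have "F v > 0" using assms unfolding F_def by simp
  from V_prop[OF this] show ?thesis using F_inj assms by blast
qed

lemma V_mono: assumes "0 < x" "x \<le> y" shows "V x \<le> V y"
proof (rule ccontr)
  assume "\<not> V x \<le> V y"
  hence "F (V y) < F (V x)" using V_prop assms by (intro F_strict) auto
  thus False using V_prop assms by auto
qed

lemma V_le: assumes "0 < x" shows "V x \<le> x"
  using F_ge V_prop assms by metis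

lemma V_cont: assumes "0 < x" shows "isCont V x"
proof -
  let ?v = "V x"
  have v: "0 < ?v" "?v < 1" "F ?v = x" using V_prop assms by auto
  have "isCont V (F ?v)"
    by (rule isCont_inverse_function2[of "?v/2" _ "(?v+1)/2"])
       (use v in \<open>auto intro!: V_F F_cont\<close>)
  thus ?thesis using v by simp
qed

lemma q0_prop:
  assumes fin: "finite S" and ne: "S \<noteq> {}"
  shows "0 < q0bar \<theta> S \<and> q0bar \<theta> S < 1 \<and>
      (\<Sum>i\<in>S. V (q0bar \<theta> S * exp (\<theta> i - 1))) = 1 - q0bar \<theta> S"
proof -
  define c where "c i = exp (\<theta> i - 1)" for i
  define G where "G q = (\<Sum>i\<in>S. V (q * c i)) + q" for q
  have cpos: "c i > 0" for i by (simp add: c_def)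
  define C where "C = (\<Sum>i\<in>S. c i)"
  have C0: "C \<ge> 0" unfolding C_def using cpos by (simp add: sum_nonneg less_imp_le)
  define a where "a = 1 / (2 * (C + 1))"
  have a0: "0 < a" "a \<le> 1/2" using C0 by (auto simp: a_def field_simps)
  have "G a \<le> (\<Sum>i\<in>S. a * c i) + a" unfolding G_def
    using V_le a0 cpos by (intro add_right_mono sum_mono) auto
  also have "\<dots> = a * (C + 1)" by (simp add: C_def sum_distrib_left algebra_simps)
  also have "\<dots> = 1/2" using C0 by (simp add: a_def)
  finally have Ga: "G a \<le> 1" by simp
  obtain i0 where i0: "i0 \<in> S" using ne by auto
  define m where "m = V (c i0 / 2)"
  have m: "0 < m" "m < 1" using V_prop[of "c i0 / 2"] cpos by (auto simp: m_def)
  define b where "b = max (1/2) (1 - m/2)"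
  have b: "1/2 \<le> b" "b < 1" "1 - m/2 \<le> b" using m by (auto simp: b_def)
  have "m \<le> V (b * c i0)" unfolding m_def using cpos[of i0] b
    by (intro V_mono) (auto intro: mult_right_mono)
  also have "\<dots> \<le> (\<Sum>i\<in>S. V (b * c i))"
    using fin i0 V_prop b cpos by (intro member_le_sum) (auto intro: less_imp_le)
  finally have Gb: "1 \<le> G b" using b unfolding G_def by linarith
  have contG: "isCont G q" if "0 < q" for q
    unfolding G_def using that cpos
    by (intro continuous_intros isCont_sum ballI isCont_o2[OF _ V_cont]) auto
  have "\<exists>q. a \<le> q \<and> q \<le> b \<and> G q = 1"
    by (rule IVT[of G a 1 b, OF Ga Gb]) (use a0 b contG in auto)
  then obtain q where q: "a \<le> q" "q \<le> b" "G q = 1" by blast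
  have Gstrict: "G p < G q" if "0 < p" "p < q" for p q
  proof -
    have "(\<Sum>i\<in>S. V (p * c i)) \<le> (\<Sum>i\<in>S. V (q * c i))"
      using that cpos by (intro sum_mono V_mono) (auto intro: mult_right_mono)
    thus ?thesis unfolding G_def using that by simp
  qed
  have ex1: "\<exists>!q. 0 < q \<and> q < 1 \<and> (\<Sum>i\<in>S. V (q * exp (\<theta> i - 1))) = 1 - q"
  proof (rule ex1I[of _ q])
    show "0 < q \<and> q < 1 \<and> (\<Sum>i\<in>S. V (q * exp (\<theta> i - 1))) = 1 - q"
      using q a0 b unfolding G_def c_def by auto
  next
    fix p assume p: "0 < p \<and> p < 1 \<and> (\<Sum>i\<in>S. V (p * exp (\<theta> i - 1))) = 1 - p"
    hence Gp: "G p = 1" unfolding G_def c_def by simp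
    show "p = q"
    proof (rule ccontr)
      assume "p \<noteq> q"
      hence "p < q \<or> q < p" by auto
      thus False using Gstrict[of p q] Gstrict[of q p] Gp q a0 p by auto
    qed
  qed
  show ?thesis unfolding q0bar_def by (rule theI'[OF ex1])
qed

lemma w_diff: fixes a b :: real assumes "a < 1" "b < 1" shows "b/(1-b) - a/(1-a) = (b-a)/((1-a)*(1-b))"
proof -
  have "1-a \<noteq> 0" "1-b \<noteq> 0" using assms by auto
  thus ?thesis by (simp add: field_simps)
qed

lemma wA: fixes a b :: real assumes "0 < a" "a \<le> b" "b < 1" shows "(b-a)/(1-a)^2 \<le> b/(1-b) - a/(1-a)"
proof -
  have "(b-a)/((1-a)*(1-a)) \<le> (b-a)/((1-a)*(1-b))"
  proof (rule divide_left_mono)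
    show "(1-a)*(1-b) \<le> (1-a)*(1-a)" using assms by (intro mult_left_mono) auto
  qed (use assms in auto)
  thus ?thesis using w_diff[of a b] assms by (simp add: power2_eq_square)
qed

lemma wB: fixes a a' m :: real assumes "0 < a'" "a' \<le> a" "a \<le> m" "m < 1"
  shows "a/(1-a) - a'/(1-a') \<le> (a-a')/(1-m)^2"
proof -
  have "(1-m)*(1-m) \<le> (1-a')*(1-a)" using assms by (rule_tac mult_mono) auto
  hence "(a-a')/((1-a')*(1-a)) \<le> (a-a')/((1-m)*(1-m))"
    using assms by (rule_tac divide_left_mono) auto
  thus ?thesis using w_diff[of a' a] assms by (simp add: power2_eq_square)
qed

lemma re_swap:
  fixes n :: nat and \<theta> :: "nat \<Rightarrow> real" and S :: "nat set"
  assumes mono: "\<And>i j. 1 \<le> i \<Longrightarrow> i \<le> j \<Longrightarrow> j \<le> n \<Longrightarrow> \<theta> j \<le> \<theta> i"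
    and S_sub: "S \<subseteq> {1..n}" and S_ne: "S \<noteq> {}" and one_notin: "1 \<notin> S"
  shows "re \<theta> S \<le> re \<theta> (insert 1 (S - {Min S}))"
proof -
  have fin: "finite S" using S_sub finite_subset by blast
  define j where "j = Min S"
  have jS: "j \<in> S" using fin S_ne by (simp add: j_def)
  define R where "R = S - {j}"
  define T where "T = insert 1 R"
  have finR: "finite R" "finite T" using fin by (auto simp: R_def T_def)
  have oneR: "1 \<notin> R" using one_notin by (auto simp: R_def)
  have jR: "j \<notin> R" by (simp add: R_def)
  have S_eq: "S = insert j R" using jS by (auto simp: R_def)
  have j1n: "1 \<le> j" "j \<le> n" using jS S_sub by auto
  have th_le: "\<theta> i \<le> \<theta> j" if "i \<in> S" for i
    using that fin S_sub j1n by (intro mono) (auto simp: j_def)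
  have th1: "\<theta> j \<le> \<theta> 1" using j1n by (intro mono) auto
  define q where "q = q0bar \<theta> S"
  define q' where "q' = q0bar \<theta> T"
  define c where "c i = exp (\<theta> i - 1)" for i
  have cpos: "0 < c i" for i by (simp add: c_def)
  have cnn: "0 \<le> c i" for i using cpos[of i] by simp
  have c_le: "c i \<le> c j" if "i \<in> S" for i using th_le[OF that] by (simp add: c_def)
  have c1: "c j \<le> c 1" using th1 by (simp add: c_def)
  have qS: "0 < q" "q < 1" "(\<Sum>i\<in>S. V (q * c i)) = 1 - q"
    using q0_prop[OF fin S_ne, of \<theta>] by (auto simp: q_def c_def)
  have qT: "0 < q'" "q' < 1" "(\<Sum>i\<in>T. V (q' * c i)) = 1 - q'"
    using q0_prop[OF finR(2), of \<theta>] by (auto simp: q'_def c_def T_def)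
  define v where "v i = V (q * c i)" for i
  define v' where "v' i = V (q' * c i)" for i
  have vp: "0 < v i" "v i < 1" for i using V_prop[of "q * c i"] qS cpos by (auto simp: v_def)
  have vp': "0 < v' i" "v' i < 1" for i using V_prop[of "q' * c i"] qT cpos by (auto simp: v'_def)
  have sumS: "v j + (\<Sum>i\<in>R. v i) = 1 - q"
    using qS(3) finR jR unfolding S_eq v_def by simp
  have sumT: "v' 1 + (\<Sum>i\<in>R. v' i) = 1 - q'"
    using qT(3) finR oneR unfolding T_def v'_def by simp
  have qq: "q' \<le> q"
  proof (rule ccontr)
    assume "\<not> q' \<le> q"
    hence lt: "q < q'" by simp
    have "v j \<le> v' 1" unfolding v_def v'_def using qS cpos c1 lt
      by (intro V_mono mult_mono) (auto intro: less_imp_le)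
    moreover have "(\<Sum>i\<in>R. v i) \<le> (\<Sum>i\<in>R. v' i)" unfolding v_def v'_def using qS cpos cnn lt
      by (intro sum_mono V_mono mult_right_mono) auto
    ultimately show False using sumS sumT lt by linarith
  qed
  have vR: "v' i \<le> v i" for i unfolding v_def v'_def using qT cpos cnn qq
    by (intro V_mono mult_right_mono) auto
  have vj: "v i \<le> v j" if "i \<in> S" for i unfolding v_def using qS cpos cnn c_le[OF that]
    by (intro V_mono mult_left_mono) auto
  have Rdiff: "(\<Sum>i\<in>R. v i - v' i) \<le> v' 1 - v j"
    using sumS sumT qq by (simp add: sum_subtractf)
  have Rnn: "0 \<le> (\<Sum>i\<in>R. v i - v' i)" using vR by (intro sum_nonneg) auto
  have vj1: "v j \<le> v' 1" using Rdiff Rnn by linarith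
  define D where "D = (1 - v j)^2"
  have Dpos: "0 < D" using vp[of j] by (simp add: D_def)
  have qbS: "qbar \<theta> S i = v i" for i by (simp add: qbar_def v_def c_def q_def)
  have qbT: "qbar \<theta> T i = v' i" for i by (simp add: qbar_def v'_def c_def q'_def)
  have reS: "re \<theta> S = v j/(1-v j) + (\<Sum>i\<in>R. v i/(1-v i))"
  proof -
    have "re \<theta> S = (\<Sum>i\<in>S. v i/(1-v i))" using S_ne unfolding re_def qbS by simp
    also have "\<dots> = v j/(1-v j) + (\<Sum>i\<in>R. v i/(1-v i))"
      using finR jR by (simp add: S_eq)
    finally show ?thesis .
  qed
  have reT: "re \<theta> T = v' 1/(1-v' 1) + (\<Sum>i\<in>R. v' i/(1-v' i))"
  proof -
    have "re \<theta> T = (\<Sum>i\<in>T. v' i/(1-v' i))" unfolding re_def qbT by (simp add: T_def)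
    also have "\<dots> = v' 1/(1-v' 1) + (\<Sum>i\<in>R. v' i/(1-v' i))"
      using finR oneR by (simp add: T_def)
    finally show ?thesis .
  qed
  have "(\<Sum>i\<in>R. v i/(1-v i) - v' i/(1-v' i)) \<le> (\<Sum>i\<in>R. (v i - v' i)/D)"
    unfolding D_def
    using vp vp' vR vj S_eq by (intro sum_mono wB) auto
  also have "\<dots> = (\<Sum>i\<in>R. v i - v' i)/D" by (simp add: sum_divide_distrib)
  also have "\<dots> \<le> (v' 1 - v j)/D" using Rdiff Dpos by (simp add: divide_right_mono)
  also have "\<dots> \<le> v' 1/(1-v' 1) - v j/(1-v j)" unfolding D_def
    using vp vp' vj1 by (intro wA) auto
  finally have key: "(\<Sum>i\<in>R. v i/(1-v i) - v' i/(1-v' i)) \<le> v' 1/(1-v' 1) - v j/(1-v j)" .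
  have "re \<theta> S \<le> re \<theta> T" unfolding reS reT using key by (simp add: sum_subtractf)
  thus ?thesis by (simp add: T_def R_def j_def)
qed

lemma re_single_nonneg: "0 \<le> re \<theta> {k}"
proof -
  have q: "0 < q0bar \<theta> {k}" using q0_prop[of "{k}" \<theta>] by simp
  have "0 < qbar \<theta> {k} k" "qbar \<theta> {k} k < 1"
    using V_prop[of "q0bar \<theta> {k} * exp (\<theta> k - 1)"] q by (auto simp: qbar_def)
  thus ?thesis by (simp add: re_def)
qed

theorem lemma4:
  fixes n :: nat and \<theta> :: "nat \<Rightarrow> real" and S :: "nat set"
  assumes mono: "\<And>i j. 1 \<le> i \<Longrightarrow> i \<le> j \<Longrightarrow> j \<le> n \<Longrightarrow> \<theta> j \<le> \<theta> i"
    and nonneg: "\<And>i. 1 \<le> i \<Longrightarrow> i \<le> n \<Longrightarrow> 0 \<le> \<theta> i"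
    and S_sub: "S \<subseteq> {1..n}" and S_ne: "S \<noteq> {}" and one_notin: "1 \<notin> S"
  shows "re \<theta> (insert 1 (S - {Min S})) \<ge> re \<theta> S
    \<and> (\<exists>T. T \<subseteq> {1..n} \<and> 1 \<in> T \<and> (\<forall>U. U \<subseteq> {1..n} \<longrightarrow> re \<theta> U \<le> re \<theta> T))"
proof
  show "re \<theta> (insert 1 (S - {Min S})) \<ge> re \<theta> S"
    by (rule re_swap[OF mono S_sub S_ne one_notin])
next
  have n1: "1 \<le> n" using S_sub S_ne by fastforce
  define M where "M = Max (re \<theta> ` Pow {1..n})"
  have finP: "finite (re \<theta> ` Pow {1..n})" by simp
  have "M \<in> re \<theta> ` Pow {1..n}" unfolding M_def by (rule Max_in[OF finP]) auto
  then obtain U where U: "U \<subseteq> {1..n}" "re \<theta> U = M" by auto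
  have Mge: "re \<theta> U' \<le> M" if "U' \<subseteq> {1..n}" for U'
    unfolding M_def using that by (intro Max_ge[OF finP]) auto
  show "\<exists>T. T \<subseteq> {1..n} \<and> 1 \<in> T \<and> (\<forall>U. U \<subseteq> {1..n} \<longrightarrow> re \<theta> U \<le> re \<theta> T)"
  proof (cases "1 \<in> U")
    case True
    have "\<forall>U'. U' \<subseteq> {1..n} \<longrightarrow> re \<theta> U' \<le> re \<theta> U" using U(2) Mge by simp
    thus ?thesis using U(1) True by blast
  next
    case False
    show ?thesis
    proof (cases "U = {}")
      case True
      have "M = 0" using U True by (simp add: re_def)
      hence "\<forall>U'. U' \<subseteq> {1..n} \<longrightarrow> re \<theta> U' \<le> re \<theta> {1}"
        using Mge re_single_nonneg[of \<theta> 1] by (meson order_trans)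
      moreover have "{1} \<subseteq> {1..n}" using n1 by simp
      ultimately show ?thesis by blast
    next
      case ne: False
      let ?T = "insert 1 (U - {Min U})"
      have "re \<theta> U \<le> re \<theta> ?T" by (rule re_swap[OF mono U(1) ne False])
      hence "\<forall>U'. U' \<subseteq> {1..n} \<longrightarrow> re \<theta> U' \<le> re \<theta> ?T"
        using Mge U(2) by (meson order_trans)
      moreover have "?T \<subseteq> {1..n}" using n1 U(1) by auto
      ultimately show ?thesis by blast
    qed
  qed
qed

end
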